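(* Let $\mathcal{P}$ be a probability distribution over $\Omega=\mathcal{X}\times\mathcal{Y}\times[K]$, and let $\hat z:\mathcal{X}\to J$ be a proxy with finite range $J$, where every $j\in J$ has $\hat r_j:=\Pr_{(x,y,z)\sim\mathcal{P}}[\hat z(x)=j]>0$. For $j\in J$ let $a_j\in\mathbb{R}^K$ be the row vector with entries $a_{j,i}=\Pr_{(x,y,z)\sim\mathcal{P}}[z=i\mid \hat z(x)=j]$, and let $A$ be the $|J|\times K$ matrix with rows $a_j$. Let $U=(1/K,\dots,1/K)$. Let $q$ be any minimizer of $\lVert qA-U\rVert_2$ over stochastic row vectors $q\in\mathbb{R}^{|J|}$ (i.e. $q_j\ge 0$, $\sum_j q_j=1$), set $\rho_j=q_j/\hat r_j$, and normalize $\rho_j\leftarrow\rho_j/\max_{j'}\rho_{j'}$. Consider the sampling procedure: draw $(x,y,z)\sim\mathcal{P}$ (with $z$ unobserved), compute $\hat z(x)$, and accept the sample with probability $\rho_{\hat z(x)}$. If $U\in C(A)$, then the distribution of the protected attribute $z$ among accepted samples is uniform, i.e. $\Pr[z=i\mid \text{accepted}]=1/K$ for all $i\in[K]$.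
   Context: $C(A)$ denotes the convex hull of the rows of $A$, i.e. $\{\sum_j q_j a_j: q_j\ge 0,\ \sum_j q_j=1\}$. Here $x$ is the feature vector (excluding the sensitive attribute), $y\in\{0,1\}$ the label, and $z\in[K]$ the sensitive group. *)

theory Defs
  imports "HOL-Probability.Probability"
begin

text \<open>Samples are triples (x, y, z) :: 'x * 'y * nat; the sensitive attribute is
  z = snd (snd w), with groups [K] = {1..K}.\<close>

definition zattr :: "'x \<times> 'y \<times> nat \<Rightarrow> nat" where
  "zattr w = snd (snd w)"

definition rhat :: "('x \<times> 'y \<times> nat) measure \<Rightarrow> ('x \<Rightarrow> 'j) \<Rightarrow> 'j \<Rightarrow> real" where
  "rhat P zhat j = measure P {w \<in> space P. zhat (fst w) = j}"

definition amat :: "('x \<times> 'y \<times> nat) measure \<Rightarrow> ('x \<Rightarrow> 'j) \<Rightarrow> 'j \<Rightarrow> nat \<Rightarrow> real" where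
  "amat P zhat j i =
     measure P {w \<in> space P. zattr w = i \<and> zhat (fst w) = j} / rhat P zhat j"

definition stochastic :: "'j set \<Rightarrow> ('j \<Rightarrow> real) \<Rightarrow> bool" where
  "stochastic J q \<longleftrightarrow> (\<forall>j\<in>J. q j \<ge> 0) \<and> (\<Sum>j\<in>J. q j) = 1"

definition rowmul :: "'j set \<Rightarrow> ('j \<Rightarrow> real) \<Rightarrow> ('j \<Rightarrow> nat \<Rightarrow> real) \<Rightarrow> nat \<Rightarrow> real" where
  "rowmul J q A i = (\<Sum>j\<in>J. q j * A j i)"

definition distU :: "nat \<Rightarrow> 'j set \<Rightarrow> ('j \<Rightarrow> real) \<Rightarrow> ('j \<Rightarrow> nat \<Rightarrow> real) \<Rightarrow> real" where
  "distU K J q A = sqrt (\<Sum>i\<in>{1..K}. (rowmul J q A i - 1 / real K)\<^sup>2)"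

definition U_in_hull :: "nat \<Rightarrow> 'j set \<Rightarrow> ('j \<Rightarrow> nat \<Rightarrow> real) \<Rightarrow> bool" where
  "U_in_hull K J A \<longleftrightarrow> (\<exists>q. stochastic J q \<and> (\<forall>i\<in>{1..K}. rowmul J q A i = 1 / real K))"

definition rho :: "'j set \<Rightarrow> ('j \<Rightarrow> real) \<Rightarrow> ('j \<Rightarrow> real) \<Rightarrow> 'j \<Rightarrow> real" where
  "rho J q r j = (q j / r j) / Max ((\<lambda>j'. q j' / r j') ` J)"

text \<open>The sampling procedure: draw w ~ P and an independent u ~ Uniform[0,1];
  accept iff u < rho_{zhat(x)} (which happens with probability rho_{zhat(x)}).\<close>
definition proc :: "('x \<times> 'y \<times> nat) measure \<Rightarrow> (('x \<times> 'y \<times> nat) \<times> real) measure" where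
  "proc P = P \<Otimes>\<^sub>M uniform_measure lborel {0..1}"

definition accepted :: "('x \<times> 'y \<times> nat) measure \<Rightarrow> ('x \<Rightarrow> 'j) \<Rightarrow> ('j \<Rightarrow> real)
    \<Rightarrow> (('x \<times> 'y \<times> nat) \<times> real) set" where
  "accepted P zhat \<rho> = {p \<in> space (proc P). snd p < \<rho> (zhat (fst (fst p)))}"

end

theory Submission imports Defs begin

lemma Q_facts:
  shows "prob_space (uniform_measure lborel {0..1::real})"
    and "\<And>c. 0 \<le> c \<Longrightarrow> c \<le> 1 \<Longrightarrow> measure (uniform_measure lborel {0..1::real}) {u. u < c} = c"
proof -
  show "prob_space (uniform_measure lborel {0..1::real})"
    by (rule prob_space_uniform_measure) auto
  fix c :: real assume c: "0 \<le> c" "c \<le> 1"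
  have "{u. u < c} = {..<c}" by auto
  moreover have "{0..1} \<inter> {..<c} = {0..<c}" using c by auto
  ultimately show "measure (uniform_measure lborel {0..1::real}) {u. u < c} = c"
    using c by (simp add: measure_uniform_measure)
qed

lemma proc_union:
  assumes P: "prob_space P" and fin: "finite J"
    and E: "\<And>j. j \<in> J \<Longrightarrow> E j \<in> sets P" and disj: "disjoint_family_on E J"
    and c: "\<And>j. j \<in> J \<Longrightarrow> 0 \<le> c j \<and> c j \<le> (1::real)"
  shows "measure (proc P) (\<Union>j\<in>J. E j \<times> {u. u < c j}) = (\<Sum>j\<in>J. measure P (E j) * c j)"
proof -
  let ?Q = "uniform_measure lborel {0..1::real}"
  interpret Q: prob_space ?Q by (rule Q_facts(1))
  interpret P: prob_space P by (rule P)
  interpret PP: prob_space "proc P" unfolding proc_def by (rule prob_space_pair[OF P Q_facts(1)])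
  have S: "\<And>j. j \<in> J \<Longrightarrow> E j \<times> {u. u < c j} \<in> sets (proc P)"
    unfolding proc_def using E by (intro pair_measureI) auto
  have "measure (proc P) (\<Union>j\<in>J. E j \<times> {u. u < c j}) = (\<Sum>j\<in>J. measure (proc P) (E j \<times> {u. u < c j}))"
    apply (rule measure_finite_Union[OF fin])
    using S disj by (auto simp: disjoint_family_on_def PP.emeasure_eq_measure)
  also have "\<dots> = (\<Sum>j\<in>J. measure P (E j) * c j)"
  proof (rule sum.cong[OF refl])
    fix j assume j: "j \<in> J"
    have "emeasure (proc P) (E j \<times> {u. u < c j}) = emeasure P (E j) * emeasure ?Q {u. u < c j}"
      unfolding proc_def using E[OF j] by (intro Q.emeasure_pair_measure_Times) auto
    then show "measure (proc P) (E j \<times> {u. u < c j}) = measure P (E j) * c j"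
      using Q_facts(2)[of "c j"] c[OF j]
      by (simp add: P.emeasure_eq_measure Q.emeasure_eq_measure
           PP.emeasure_eq_measure ennreal_mult''[symmetric])
  qed
  finally show ?thesis .
qed

theorem lemma2:
  fixes P :: "('x \<times> 'y \<times> nat) measure"
    and zhat :: "'x \<Rightarrow> 'j" and J :: "'j set" and K :: nat and q :: "'j \<Rightarrow> real"
  assumes "prob_space P"
    and "K \<ge> 1"
    and "\<forall>w\<in>space P. zattr w \<in> {1..K}"
    and "\<forall>i. {w \<in> space P. zattr w = i} \<in> sets P"
    and "finite J"
    and "\<forall>w\<in>space P. zhat (fst w) \<in> J"
    and "\<forall>j\<in>J. {w \<in> space P. zhat (fst w) = j} \<in> sets P"
    and "\<forall>j\<in>J. rhat P zhat j > 0"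
    and "stochastic J q"
    and "\<forall>q'. stochastic J q' \<longrightarrow> distU K J q (amat P zhat) \<le> distU K J q' (amat P zhat)"
    and "U_in_hull K J (amat P zhat)"
  shows "\<forall>i\<in>{1..K}.
     measure (proc P) ({p \<in> space (proc P). zattr (fst p) = i}
                       \<inter> accepted P zhat (rho J q (rhat P zhat)))
       / measure (proc P) (accepted P zhat (rho J q (rhat P zhat)))
     = 1 / real K"
proof
  fix i assume i: "i \<in> {1..K}"
  note P = assms(1) and fin = assms(5)
  interpret P: prob_space P by (rule P)
  define A where "A = amat P zhat"
  define r where "r = rhat P zhat"
  define M where "M = Max ((\<lambda>j'. q j' / r j') ` J)"
  define rh where "rh = rho J q r"
  define F where "F j = {w \<in> space P. zhat (fst w) = j}" for j
  define E where "E j = {w \<in> space P. zattr w = i \<and> zhat (fst w) = j}" for j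
  have rpos: "\<And>j. j \<in> J \<Longrightarrow> r j > 0" using assms(8) r_def by auto
  have qnn: "\<And>j. j \<in> J \<Longrightarrow> q j \<ge> 0" and qsum: "(\<Sum>j\<in>J. q j) = 1"
    using assms(9) by (auto simp: stochastic_def)
  \<comment> \<open>the minimizer hits U\<close>
  obtain q0 where q0: "stochastic J q0" "\<forall>i\<in>{1..K}. rowmul J q0 A i = 1 / real K"
    using assms(11) A_def U_in_hull_def by blast
  have "distU K J q0 A = 0" using q0(2) by (simp add: distU_def)
  hence "distU K J q A \<le> 0" using assms(10) q0(1) A_def by metis
  hence "(\<Sum>i\<in>{1..K}. (rowmul J q A i - 1 / real K)\<^sup>2) = 0"
    unfolding distU_def by (metis real_sqrt_le_0_iff sum_nonneg zero_le_power2 order_antisym)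
  hence "(rowmul J q A i - 1 / real K)\<^sup>2 = 0"
    using i by (subst (asm) sum_nonneg_eq_0_iff) auto
  hence row: "(\<Sum>j\<in>J. q j * A j i) = 1 / real K" by (simp add: rowmul_def)
  have Jne: "J \<noteq> {}" using qsum by auto
  obtain j0 where j0: "j0 \<in> J" "q j0 > 0"
  proof (rule ccontr)
    assume "\<not> thesis"
    with that have "\<forall>j\<in>J. q j = 0" using qnn by force
    with qsum show False by simp
  qed
  have Mge: "\<And>j. j \<in> J \<Longrightarrow> q j / r j \<le> M" unfolding M_def using fin by auto
  have Mpos: "M > 0" using Mge[OF j0(1)] j0 rpos[OF j0(1)] by (smt (verit) divide_pos_pos)
  have rh: "\<And>j. j \<in> J \<Longrightarrow> rh j = q j / r j / M" unfolding rh_def rho_def M_def by simp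
  have rh01: "\<And>j. j \<in> J \<Longrightarrow> 0 \<le> rh j \<and> rh j \<le> 1"
  proof -
    fix j assume j: "j \<in> J"
    have "q j / r j \<ge> 0" using qnn[OF j] rpos[OF j] by simp
    thus "0 \<le> rh j \<and> rh j \<le> 1" unfolding rh[OF j] using Mge[OF j] Mpos
      by (metis divide_le_eq_1_pos divide_nonneg_pos)
  qed
  have sp: "space (proc P) = space P \<times> UNIV" by (simp add: proc_def space_pair_measure)
  have acc: "accepted P zhat rh = (\<Union>j\<in>J. F j \<times> {u. u < rh j})"
    using assms(6) unfolding accepted_def sp F_def by auto
  have num: "{p \<in> space (proc P). zattr (fst p) = i} \<inter> accepted P zhat rh = (\<Union>j\<in>J. E j \<times> {u. u < rh j})"
    using assms(6) unfolding accepted_def sp E_def by auto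
  have Fs: "\<And>j. j \<in> J \<Longrightarrow> F j \<in> sets P" using assms(7) F_def by auto
  have Es: "\<And>j. j \<in> J \<Longrightarrow> E j \<in> sets P"
  proof -
    fix j assume "j \<in> J"
    have "E j = {w \<in> space P. zattr w = i} \<inter> F j" by (auto simp: E_def F_def)
    thus "E j \<in> sets P" using Fs[OF \<open>j \<in> J\<close>] assms(4) by auto
  qed
  have dF: "disjoint_family_on F J" by (auto simp: disjoint_family_on_def F_def)
  have dE: "disjoint_family_on E J" by (auto simp: disjoint_family_on_def E_def)
  have "measure (proc P) (accepted P zhat rh) = (\<Sum>j\<in>J. measure P (F j) * rh j)"
    unfolding acc by (rule proc_union[OF P fin Fs dF rh01])
  also have "\<dots> = (\<Sum>j\<in>J. q j / M)"
  proof (rule sum.cong[OF refl])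
    fix j assume j: "j \<in> J"
    have "measure P (F j) = r j" by (simp add: F_def r_def rhat_def)
    thus "measure P (F j) * rh j = q j / M" using rh[OF j] rpos[OF j] by simp
  qed
  also have "\<dots> = 1 / M" using qsum by (simp add: sum_divide_distrib[symmetric])
  finally have den: "measure (proc P) (accepted P zhat rh) = 1 / M" .
  have "measure (proc P) ({p \<in> space (proc P). zattr (fst p) = i} \<inter> accepted P zhat rh)
      = (\<Sum>j\<in>J. measure P (E j) * rh j)"
    unfolding num by (rule proc_union[OF P fin Es dE rh01])
  also have "\<dots> = (\<Sum>j\<in>J. q j * A j i / M)"
  proof (rule sum.cong[OF refl])
    fix j assume j: "j \<in> J"
    have "A j i = measure P (E j) / r j" by (simp add: E_def A_def amat_def r_def)
    thus "measure P (E j) * rh j = q j * A j i / M" using rh[OF j] rpos[OF j] by simp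
  qed
  also have "\<dots> = 1 / real K / M" using row by (simp add: sum_divide_distrib[symmetric])
  finally have nu: "measure (proc P) ({p \<in> space (proc P). zattr (fst p) = i} \<inter> accepted P zhat rh) = 1 / real K / M" .
  show "measure (proc P) ({p \<in> space (proc P). zattr (fst p) = i}
                       \<inter> accepted P zhat (rho J q (rhat P zhat)))
       / measure (proc P) (accepted P zhat (rho J q (rhat P zhat)))
     = 1 / real K"
    using nu den Mpos unfolding rh_def r_def by simp
qed

end
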